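(* Fix $n\ge1$. A point $H\in\mathcal H$ belongs to $\mathcal S_n=\{H\in\mathcal H: X_n(H)=0,\ H^{(n)}=z^n\}$ if and only if $z^n\cdot\mathcal H_+\subset\mathcal H_+$, i.e. multiplication by $z^n$ maps the span $\mathcal H_+$ of the series $H^{(0)},H^{(1)},\dots$ of that point into itself.
   Context: Let $z$ be a formal variable and $\mathcal L$ the space of formal Laurent series $\sum_{j\le N} l_j z^j$ (finitely many positive powers of $z$). Let $\mathcal H$ be the set of sequences $H=(H^{(k)})_{k\ge0}$ of elements of $\mathcal L$ with $H^{(0)}=1$ and, for $k\ge1$, $H^{(k)}=z^k+\sum_{l\ge1}H^k_l z^{-l}$; the coefficients $H^k_l$ are coordinates on $\mathcal H$, and we set $H^0_l=0$. The central system (CS) is the family of vector fields $X_j$, $j\ge1$, on $\mathcal H$, with associated times $t_j$, defined by $$\frac{\partial H^{(k)}}{\partial t_j}=H^{(j+k)}-H^{(j)}H^{(k)}+\sum_{l=1}^{k}H^j_lH^{(k-l)}+\sum_{l=1}^{j}H^k_lH^{(j-l)},\qquad k\ge0;$$ the right-hand side contains only negative powers of $z$, so this determines the components $X_j(H^k_l)$. For $H\in\mathcal H$ let $\mathcal H_+=\mathrm{span}\{H^{(k)}:k\ge0\}$ (finite linear combinations). *)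

theory Defs
  imports Main "HOL.Complex"
begin

text \<open>Formal Laurent series in z with finitely many positive powers, represented
  by their coefficient function: f j is the coefficient of z^j.\<close>
type_synonym lseries = "int \<Rightarrow> complex"

definition laurentL :: "lseries set" where
  "laurentL = {f. \<exists>N. \<forall>j>N. f j = 0}"

text \<open>Product (Cauchy product); for elements of laurentL the index set is finite.\<close>
definition lmul :: "lseries \<Rightarrow> lseries \<Rightarrow> lseries" where
  "lmul f g = (\<lambda>j. \<Sum>i\<in>{i. f i \<noteq> 0 \<and> g (j - i) \<noteq> 0}. f i * g (j - i))"

definition zpow :: "nat \<Rightarrow> lseries" where
  "zpow n = (\<lambda>j. if j = int n then 1 else 0)"

definition Hspace :: "(nat \<Rightarrow> lseries) set" where
  "Hspace = {H. H 0 = zpow 0 \<and>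
     (\<forall>k\<ge>1. H k \<in> laurentL \<and> (\<forall>j\<ge>0. H k j = zpow k j))}"

definition Hc :: "(nat \<Rightarrow> lseries) \<Rightarrow> nat \<Rightarrow> nat \<Rightarrow> complex" where
  "Hc H k l = (if k = 0 then 0 else H k (- int l))"

text \<open>Right-hand side of the central system for dH^(k)/dt_j.\<close>
definition cs_rhs :: "(nat \<Rightarrow> lseries) \<Rightarrow> nat \<Rightarrow> nat \<Rightarrow> lseries" where
  "cs_rhs H j k = (\<lambda>m. H (j + k) m - lmul (H j) (H k) m
      + (\<Sum>l=1..k. Hc H j l * H (k - l) m)
      + (\<Sum>l=1..j. Hc H k l * H (j - l) m))"

definition X_vanishes :: "nat \<Rightarrow> (nat \<Rightarrow> lseries) \<Rightarrow> bool" where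
  "X_vanishes j H \<longleftrightarrow> (\<forall>k\<ge>1. \<forall>l\<ge>1. cs_rhs H j k (- int l) = 0)"

definition S_n :: "nat \<Rightarrow> (nat \<Rightarrow> lseries) set" where
  "S_n n = {H \<in> Hspace. X_vanishes n H \<and> H n = zpow n}"

definition Hplus :: "(nat \<Rightarrow> lseries) \<Rightarrow> lseries set" where
  "Hplus H = {f. \<exists>c :: nat \<Rightarrow> complex. \<exists>N. f = (\<lambda>m. \<Sum>k\<le>N. c k * H k m)}"

end

theory Submission
  imports Defs
begin

lemma ext_sum:
  fixes c x :: "nat \<Rightarrow> complex"
  assumes "N1 \<le> (N::nat)"
  shows "(\<Sum>k\<le>N. (if k \<le> N1 then c k else 0) * x k) = (\<Sum>k\<le>N1. c k * x k)"
  using assms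
proof (induction N rule: dec_induct)
  case base
  then show ?case by (intro sum.cong) auto
next
  case (step m)
  then show ?case by simp
qed

lemma hp_zero: "(\<lambda>m. 0) \<in> Hplus H"
  unfolding Hplus_def by (rule CollectI, rule exI[of _ "\<lambda>_. 0"], rule exI[of _ 0]) simp

lemma hp_basis: "H k \<in> Hplus H"
proof -
  have "H k = (\<lambda>m. \<Sum>j\<le>k. (if j = k then 1 else 0) * H j m)"
  proof (rule ext)
    fix m
    have "(\<Sum>j\<le>k. (if j = k then 1 else 0) * H j m) = (\<Sum>j\<le>k. if j = k then H j m else 0)"
      by (intro sum.cong) auto
    then show "H k m = (\<Sum>j\<le>k. (if j = k then 1 else 0) * H j m)" by simp
  qed
  then show ?thesis unfolding Hplus_def
    by (intro CollectI exI[of _ "\<lambda>j. if j = k then 1 else 0"] exI[of _ k]) simp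
qed

lemma hp_smult: "f \<in> Hplus H \<Longrightarrow> (\<lambda>m. a * f m) \<in> Hplus H"
proof -
  assume "f \<in> Hplus H"
  then obtain c N where f: "f = (\<lambda>m. \<Sum>k\<le>N. c k * H k m)" unfolding Hplus_def by blast
  have "(\<lambda>m. a * f m) = (\<lambda>m. \<Sum>k\<le>N. (a * c k) * H k m)"
    by (simp add: f sum_distrib_left mult.assoc)
  then show ?thesis unfolding Hplus_def by (intro CollectI exI[of _ "\<lambda>k. a * c k"] exI[of _ N]) simp
qed

lemma hp_add: "f \<in> Hplus H \<Longrightarrow> g \<in> Hplus H \<Longrightarrow> (\<lambda>m. f m + g m) \<in> Hplus H"
proof -
  assume "f \<in> Hplus H" "g \<in> Hplus H"
  then obtain c1 N1 c2 N2 where f: "f = (\<lambda>m. \<Sum>k\<le>N1. c1 k * H k m)"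
    and g: "g = (\<lambda>m. \<Sum>k\<le>N2. c2 k * H k m)" unfolding Hplus_def by blast
  define c where "c k = (if k \<le> N1 then c1 k else 0) + (if k \<le> N2 then c2 k else 0)" for k
  have "(\<lambda>m. f m + g m) = (\<lambda>m. \<Sum>k\<le>N1+N2. c k * H k m)"
  proof (rule ext)
    fix m
    have "(\<Sum>k\<le>N1+N2. c k * H k m) = (\<Sum>k\<le>N1+N2. (if k \<le> N1 then c1 k else 0) * H k m)
       + (\<Sum>k\<le>N1+N2. (if k \<le> N2 then c2 k else 0) * H k m)"
      unfolding c_def by (simp add: distrib_right sum.distrib)
    also have "\<dots> = f m + g m" unfolding f g
      by (simp add: ext_sum)
    finally show "f m + g m = (\<Sum>k\<le>N1+N2. c k * H k m)" by simp
  qed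
  then show ?thesis unfolding Hplus_def by blast
qed

lemma hp_diff: "f \<in> Hplus H \<Longrightarrow> g \<in> Hplus H \<Longrightarrow> (\<lambda>m. f m - g m) \<in> Hplus H"
proof -
  assume a: "f \<in> Hplus H" "g \<in> Hplus H"
  have "(\<lambda>m. f m + (-1) * g m) \<in> Hplus H" by (rule hp_add[OF a(1) hp_smult[OF a(2)]])
  then show ?thesis by simp
qed

lemma hp_sum: "finite A \<Longrightarrow> (\<And>k. k \<in> A \<Longrightarrow> g k \<in> Hplus H) \<Longrightarrow>
   (\<lambda>m. \<Sum>k\<in>A. c k * g k m) \<in> Hplus H"
proof (induction A rule: finite_induct)
  case empty
  then show ?case using hp_zero by simp
next
  case (insert x F)
  have "(\<lambda>m. c x * g x m + (\<Sum>k\<in>F. c k * g k m)) \<in> Hplus H"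
    using insert by (intro hp_add hp_smult hp_basis) auto
  then show ?case using insert by simp
qed

lemma coeff_nonneg:
  assumes "H \<in> Hspace" "j \<ge> 0"
  shows "H k j = (if j = int k then 1 else 0)"
proof (cases "k = 0")
  case True
  then show ?thesis using assms unfolding Hspace_def zpow_def by auto
next
  case False
  then show ?thesis using assms unfolding Hspace_def zpow_def by auto
qed

lemma uniq:
  assumes "H \<in> Hspace" "g \<in> Hplus H" "\<And>m. m \<ge> 0 \<Longrightarrow> g m = 0"
  shows "g = (\<lambda>m. 0)"
proof -
  obtain c N where g: "g = (\<lambda>m. \<Sum>k\<le>N. c k * H k m)" using assms(2) unfolding Hplus_def by blast
  have c0: "c j = 0" if "j \<le> N" for j
  proof -
    have "g (int j) = (\<Sum>k\<le>N. c k * (if int j = int k then 1 else 0))"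
      unfolding g using coeff_nonneg[OF assms(1)] by simp
    also have "\<dots> = c j" using that by (simp add: if_distrib cong: if_cong)
    finally show ?thesis using assms(3)[of "int j"] by simp
  qed
  show ?thesis unfolding g by (rule ext) (simp add: c0)
qed

lemma shift: "lmul (zpow n) f = (\<lambda>j. f (j - int n))"
proof (rule ext)
  fix j
  show "lmul (zpow n) f j = f (j - int n)"
  proof (cases "f (j - int n) = 0")
    case True
    then have e: "{i. zpow n i \<noteq> 0 \<and> f (j - i) \<noteq> 0} = {}" unfolding zpow_def by auto
    show ?thesis using True unfolding lmul_def e by simp
  next
    case False
    then have "{i. zpow n i \<noteq> 0 \<and> f (j - i) \<noteq> 0} = {int n}" unfolding zpow_def by auto
    then show ?thesis unfolding lmul_def zpow_def by simp
  qed
qed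

lemma key:
  assumes H: "H \<in> Hspace" and Hn: "H n = zpow n" and n: "n \<ge> 1" and k: "k \<ge> 1" and m: "m \<ge> 0"
  shows "cs_rhs H n k m = 0"
proof -
  have s1: "(\<Sum>l=1..k. Hc H n l * H (k - l) m) = 0"
    by (rule sum.neutral) (use n in \<open>auto simp: Hc_def Hn zpow_def\<close>)
  have "(\<Sum>l=1..n. Hc H k l * H (n - l) m) = (\<Sum>l=1..n. (if l = nat (int n - m) then H k (- int l) else 0))"
  proof (rule sum.cong)
    fix l assume l: "l \<in> {1..n}"
    show "Hc H k l * H (n - l) m = (if l = nat (int n - m) then H k (- int l) else 0)"
      using l k m by (auto simp: Hc_def coeff_nonneg[OF H m])
  qed simp
  also have "\<dots> = (if nat (int n - m) \<in> {1..n} then H k (- int (nat (int n - m))) else 0)"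
    by (simp add: sum.delta')
  finally have s2: "(\<Sum>l=1..n. Hc H k l * H (n - l) m) =
     (if 0 \<le> m \<and> m < int n then H k (m - int n) else 0)" using m by auto
  have lm: "lmul (H n) (H k) m = H k (m - int n)" by (simp add: Hn shift)
  show ?thesis
  proof (cases "m < int n")
    case True
    then show ?thesis unfolding cs_rhs_def s1 s2 lm using m coeff_nonneg[OF H m, of "n+k"] by simp
  next
    case False
    then have "m - int n \<ge> 0" by simp
    then show ?thesis unfolding cs_rhs_def s1 s2 lm using m False coeff_nonneg[OF H m, of "n+k"]
        coeff_nonneg[OF H, of "m - int n" k] by auto
  qed
qed

lemma cs_in:
  assumes "lmul (H n) (H k) \<in> Hplus H"
  shows "cs_rhs H n k \<in> Hplus H"
proof -
  have "(\<lambda>m. H (n + k) m - lmul (H n) (H k) m + (\<Sum>l=1..k. Hc H n l * H (k - l) m)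
      + (\<Sum>l=1..n. Hc H k l * H (n - l) m)) \<in> Hplus H"
    by (intro hp_add hp_diff hp_basis assms hp_sum) auto
  then show ?thesis unfolding cs_rhs_def .
qed

theorem mainTheorem7:
  fixes n :: nat and H :: "nat \<Rightarrow> lseries"
  assumes "n \<ge> 1" and "H \<in> Hspace"
  shows "H \<in> S_n n \<longleftrightarrow> (\<forall>f\<in>Hplus H. lmul (zpow n) f \<in> Hplus H)"
proof
  assume S: "H \<in> S_n n"
  then have Hn: "H n = zpow n" and X: "X_vanishes n H" unfolding S_n_def by auto
  have A: "lmul (zpow n) (H k) \<in> Hplus H" for k
  proof (cases "k = 0")
    case True
    have "H 0 = zpow 0" using assms(2) by (simp add: Hspace_def)
    then have "lmul (zpow n) (H k) = H n"
      using True by (simp add: shift Hn) (simp add: zpow_def)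
    then show ?thesis using hp_basis by simp
  next
    case False
    have cz: "cs_rhs H n k m = 0" for m
    proof (cases "m \<ge> 0")
      case True
      then show ?thesis using key[OF assms(2) Hn assms(1), of k m] False by simp
    next
      case f: False
      then have "m = - int (nat (-m))" "nat (-m) \<ge> 1" by auto
      then show ?thesis using X False unfolding X_vanishes_def by (metis less_one not_le)
    qed
    have "lmul (H n) (H k) = (\<lambda>m. H (n + k) m + (\<Sum>l=1..k. Hc H n l * H (k - l) m)
      + (\<Sum>l=1..n. Hc H k l * H (n - l) m))"
    proof (rule ext)
      fix m show "lmul (H n) (H k) m = H (n + k) m + (\<Sum>l=1..k. Hc H n l * H (k - l) m)
      + (\<Sum>l=1..n. Hc H k l * H (n - l) m)"
        using cz[of m] unfolding cs_rhs_def by (simp add: algebra_simps)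
    qed
    also have "\<dots> \<in> Hplus H" by (intro hp_add hp_basis hp_sum) auto
    finally show ?thesis using Hn by simp
  qed
  show "\<forall>f\<in>Hplus H. lmul (zpow n) f \<in> Hplus H"
  proof
    fix f assume "f \<in> Hplus H"
    then obtain c N where f: "f = (\<lambda>m. \<Sum>k\<le>N. c k * H k m)" unfolding Hplus_def by blast
    have "lmul (zpow n) f = (\<lambda>m. \<Sum>k\<le>N. c k * lmul (zpow n) (H k) m)"
      by (simp add: f shift)
    also have "\<dots> \<in> Hplus H" by (intro hp_sum A) auto
    finally show "lmul (zpow n) f \<in> Hplus H" .
  qed
next
  assume P: "\<forall>f\<in>Hplus H. lmul (zpow n) f \<in> Hplus H"
  have "lmul (zpow n) (H 0) \<in> Hplus H" using P hp_basis by blast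
  moreover have "H 0 = zpow 0" using assms(2) by (simp add: Hspace_def)
  then have "lmul (zpow n) (H 0) = zpow n"
    by (simp add: shift) (simp add: zpow_def)
  ultimately have "zpow n \<in> Hplus H" by simp
  then have "(\<lambda>m. zpow n m - H n m) \<in> Hplus H" by (intro hp_diff hp_basis)
  moreover have "m \<ge> 0 \<Longrightarrow> zpow n m - H n m = 0" for m
    using coeff_nonneg[OF assms(2), of m n] by (simp add: zpow_def)
  ultimately have "(\<lambda>m. zpow n m - H n m) = (\<lambda>m. 0)" using uniq[OF assms(2)] by blast
  then have Hn: "H n = zpow n" by (metis (no_types) eq_iff_diff_eq_0 ext)
  have "X_vanishes n H" unfolding X_vanishes_def
  proof (intro allI impI)
    fix k l :: nat assume k: "k \<ge> 1" and l: "l \<ge> 1"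
    have "lmul (H n) (H k) \<in> Hplus H" using P hp_basis Hn by simp
    then have "cs_rhs H n k \<in> Hplus H" by (rule cs_in)
    then have "cs_rhs H n k = (\<lambda>m. 0)"
      using uniq[OF assms(2)] key[OF assms(2) Hn assms(1) k] by blast
    then show "cs_rhs H n k (- int l) = 0" by simp
  qed
  then show "H \<in> S_n n" using Hn assms(2) unfolding S_n_def by simp
qed

end
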